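(* Consider the following $m$-round game against an adversary. In each round $i$, the adversary chooses (possibly based on the first $i-1$ rounds) numbers $0\leq p_i\leq\frac12$, $\frac{p_i}{4}\leq q_i\leq 1-p_i$, and $\gamma_i\in[0,1]$; then a random variable $X_i\in\{0,1,2\}$ is sampled with $\Pr[X_i=1]=p_i$, $\Pr[X_i=2]=q_i$, $\Pr[X_i=0]=1-p_i-q_i$, and its outcome is given to the adversary. For $k\in\mathbb R$ and $i\in[m]$ let $Z_i^{(k)}$ be the indicator of the event $\sum_{j=1}^{i}\mathbb 1\{X_j=2\}\gamma_j\leq k$, and for $j\in[m]$ let $W_j^{(k)}=\sum_{i=j}^{m}\mathbb 1\{X_i=1\}\gamma_i Z_i^{(k)}$, and $W^{(k)}=W_1^{(k)}$. Then for every adversary strategy, every $k\geq0$, every $\lambda\in\mathbb R$ and every $j\in[m]$, $$\Pr[W_j^{(k)}>\lambda]\leq\exp\left(-\frac{\lambda}{5}+3(k+1)\right).$$ In particular $\Pr[W^{(k)}>\lambda]\leq\exp\left(-\frac{\lambda}{5}+3(k+1)\right)$. *)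

theory Defs
  imports Complex_Main
begin

text \<open>Outcomes X_i are encoded as naturals 0, 1, 2. A (deterministic, adaptive)
adversary strategy maps the history of previous outcomes (a list of length i-1)
to the triple (p_i, q_i, gamma_i). Rounds are indexed 0..m-1 here.\<close>

type_synonym strategy = "nat list \<Rightarrow> real \<times> real \<times> real"

definition outcomes :: "nat \<Rightarrow> nat list set" where
  "outcomes m = {xs. length xs = m \<and> set xs \<subseteq> {0,1,2}}"

definition valid_strategy :: "nat \<Rightarrow> strategy \<Rightarrow> bool" where
  "valid_strategy m S \<longleftrightarrow>
     (\<forall>h. length h < m \<and> set h \<subseteq> {0,1,2} \<longrightarrow>
        (case S h of (p, q, g) \<Rightarrow>
           0 \<le> p \<and> p \<le> 1/2 \<and> p/4 \<le> q \<and> q \<le> 1 - p \<and> 0 \<le> g \<and> g \<le> 1))"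

definition round_prob :: "real \<times> real \<times> real \<Rightarrow> nat \<Rightarrow> real" where
  "round_prob c x = (case c of (p, q, g) \<Rightarrow>
      if x = 1 then p else if x = 2 then q else 1 - p - q)"

definition seq_prob :: "strategy \<Rightarrow> nat list \<Rightarrow> real" where
  "seq_prob S xs = (\<Prod>i<length xs. round_prob (S (take i xs)) (xs ! i))"

definition gam :: "strategy \<Rightarrow> nat list \<Rightarrow> nat \<Rightarrow> real" where
  "gam S xs i = snd (snd (S (take i xs)))"

definition ind :: "bool \<Rightarrow> real" where
  "ind b = (if b then 1 else 0)"

definition Zk :: "strategy \<Rightarrow> real \<Rightarrow> nat list \<Rightarrow> nat \<Rightarrow> real" where
  "Zk S k xs i = ind ((\<Sum>j\<le>i. ind (xs ! j = 2) * gam S xs j) \<le> k)"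

definition Wk :: "strategy \<Rightarrow> real \<Rightarrow> nat list \<Rightarrow> nat \<Rightarrow> real" where
  "Wk S k xs j = (\<Sum>i\<in>{j..<length xs}. ind (xs ! i = 1) * gam S xs i * Zk S k xs i)"

end

theory Submission
  imports Defs "HOL-Analysis.Analysis"
begin

lemma exp_chord:
  fixes g a :: real
  assumes "0 \<le> g" "g \<le> 1"
  shows "exp (g * a) \<le> 1 + g * (exp a - 1)"
proof -
  have "exp ((1 - g) *\<^sub>R 0 + g *\<^sub>R a) \<le> (1 - g) * exp 0 + g * exp a"
    using convex_onD[OF exp_convex, of g 0 a] assms by auto
  then show ?thesis by (simp add: algebra_simps)
qed

lemma exp_fifth: "exp (1/5::real) \<le> 1.2277"
proof -
  have "exp (1/20::real) \<le> 1 + 1/20 + (1/20)^2" by (rule exp_bound) auto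
  then have h: "exp (1/20::real) \<le> 1.0525" by (simp add: power2_eq_square)
  have "exp (1/5::real) = exp (1/20) ^ 4"
    by (simp add: exp_of_nat_mult[symmetric])
  also have "\<dots> \<le> 1.0525 ^ 4" using h by (intro power_mono) auto
  also have "\<dots> \<le> 1.2277" by (simp add: eval_nat_numeral)
  finally show ?thesis .
qed

lemma exp_m3: "exp (-3::real) \<le> 1 / 13.1"
proof -
  have "1 + 3/2 + (3/2)^2/2 \<le> exp (3/2::real)" by (rule exp_lower_Taylor_quadratic) auto
  then have h: "29/8 \<le> exp (3/2::real)" by (simp add: power2_eq_square)
  have "exp (3::real) = exp (3/2) ^ 2"
    by (simp add: exp_of_nat_mult[symmetric])
  also have "(29/8) ^ 2 \<le> exp (3/2::real) ^ 2" using h by (intro power_mono) auto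
  finally have "13.1 \<le> exp (3::real)" by (simp add: power2_eq_square)
  then show ?thesis by (simp add: exp_minus field_simps)
qed

lemma one_step:
  fixes p q g :: real
  assumes "0 \<le> p" "p \<le> 1/2" "p/4 \<le> q" "q \<le> 1 - p" "0 \<le> g" "g \<le> 1"
  shows "(1 - p - q) + p * exp (g/5) + q * exp (-3 * g) \<le> 1"
proof -
  have a: "exp (g/5) \<le> 1 + g * (exp (1/5) - 1)" using exp_chord[OF assms(5,6), of "1/5"] by simp
  have b: "exp (-3*g) \<le> 1 + g * (exp (-3) - 1)" using exp_chord[OF assms(5,6), of "-3"] by (simp add: mult.commute)
  have q0: "0 \<le> q" using assms by linarith
  have "g * (exp (1/5) - 1) \<le> g * (1.2277 - 1)"
    using exp_fifth assms by (intro mult_left_mono) auto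
  then have "p * exp (g/5) \<le> p * (1 + g * (1.2277 - 1))"
    using a assms by (intro mult_left_mono) auto
  moreover have "g * (exp (-3) - 1) \<le> g * (1/13.1 - 1)"
    using exp_m3 assms by (intro mult_left_mono) auto
  then have "q * exp (-3*g) \<le> q * (1 + g * (1/13.1 - 1))"
    using b q0 by (intro mult_left_mono) auto
  moreover have "g * (p * 0.2277 - q * (12.1/13.1)) \<le> 0"
    using assms by (intro mult_nonneg_nonpos) auto
  ultimately show ?thesis by (simp add: algebra_simps)
qed

fun Wr :: "real \<Rightarrow> strategy \<Rightarrow> real \<Rightarrow> nat \<Rightarrow> nat list \<Rightarrow> real" where
  "Wr k S c d [] = 0"
| "Wr k S c d (x # xs) =
     (if d = 0 then ind (x = 1) * snd (snd (S [])) * ind (c + ind (x = 2) * snd (snd (S [])) \<le> k) else 0)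
     + Wr k (\<lambda>ys. S (x # ys)) (c + ind (x = 2) * snd (snd (S []))) (d - 1) xs"

fun Br :: "real \<Rightarrow> strategy \<Rightarrow> real \<Rightarrow> nat \<Rightarrow> nat list \<Rightarrow> real" where
  "Br k S c d [] = 0"
| "Br k S c d (x # xs) =
     (if d = 0 then ind (x = 2) * snd (snd (S [])) * ind (c \<le> k) else 0)
     + Br k (\<lambda>ys. S (x # ys)) (c + ind (x = 2) * snd (snd (S []))) (d - 1) xs"

lemma outcomes_0: "outcomes 0 = {[]}"
  by (auto simp: outcomes_def)

lemma outcomes_Suc: "outcomes (Suc n) = (\<lambda>(x, xs). x # xs) ` ({0,1,2} \<times> outcomes n)"
  by (auto simp: outcomes_def length_Suc_conv image_iff)

lemma finite_outcomes: "finite (outcomes n)"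
proof -
  have "outcomes n = {xs. set xs \<subseteq> {0,1,2} \<and> length xs = n}" by (auto simp: outcomes_def)
  then show ?thesis using finite_lists_length_eq[of "{0,1,2::nat}" n] by simp
qed

lemma sum_outcomes_Suc:
  "(\<Sum>xs\<in>outcomes (Suc n). f xs) = (\<Sum>x\<in>{0,1,2}. \<Sum>xs\<in>outcomes n. f (x # xs))"
proof -
  have inj: "inj_on (\<lambda>(x, xs). x # xs) ({0,1,2::nat} \<times> outcomes n)"
    by (auto simp: inj_on_def)
  have "(\<Sum>xs\<in>outcomes (Suc n). f xs) = (\<Sum>p\<in>{0,1,2} \<times> outcomes n. f (fst p # snd p))"
    unfolding outcomes_Suc by (subst sum.reindex[OF inj]) (simp add: case_prod_beta)
  also have "\<dots> = (\<Sum>x\<in>{0,1,2}. \<Sum>xs\<in>outcomes n. f (x # xs))"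
    unfolding sum.cartesian_product by (simp add: case_prod_beta)
  finally show ?thesis .
qed

lemma seq_prob_Nil: "seq_prob S [] = 1"
  by (simp add: seq_prob_def)

lemma seq_prob_Cons:
  "seq_prob S (x # xs) = round_prob (S []) x * seq_prob (\<lambda>ys. S (x # ys)) xs"
  unfolding seq_prob_def by (simp only: length_Cons prod.lessThan_Suc_shift) simp

lemma valid_Cons:
  assumes "valid_strategy (Suc n) S" "x \<in> {0,1,2}"
  shows "valid_strategy n (\<lambda>ys. S (x # ys))"
  using assms unfolding valid_strategy_def
  by (metis (no_types, lifting) Suc_mono insert_subset length_Cons list.simps(15))

lemma valid_Nil:
  assumes "valid_strategy (Suc n) S" "S [] = (p, q, g)"
  shows "0 \<le> p \<and> p \<le> 1/2 \<and> p/4 \<le> q \<and> q \<le> 1 - p \<and> 0 \<le> g \<and> g \<le> 1"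
  using assms unfolding valid_strategy_def by (metis (no_types, lifting) case_prod_conv empty_subsetI
      list.size(3) set_empty zero_less_Suc)

lemma round_prob_nonneg:
  assumes "0 \<le> p" "p/4 \<le> q" "q \<le> 1 - p"
  shows "0 \<le> round_prob (p, q, g) x"
  using assms by (auto simp: round_prob_def)

lemma seq_prob_nonneg:
  assumes "valid_strategy n S" "xs \<in> outcomes n"
  shows "0 \<le> seq_prob S xs"
  using assms
proof (induction xs arbitrary: n S)
  case Nil then show ?case by (simp add: seq_prob_Nil)
next
  case (Cons x xs)
  then obtain n' where n: "n = Suc n'" by (auto simp: outcomes_def)
  obtain p q g where S: "S [] = (p, q, g)" by (metis prod_cases3)
  have x: "x \<in> {0,1,2}" and xs: "xs \<in> outcomes n'" using Cons.prems n by (auto simp: outcomes_def)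
  have "0 \<le> seq_prob (\<lambda>ys. S (x # ys)) xs"
    using Cons.IH[OF valid_Cons[OF Cons.prems(1)[unfolded n] x] xs] .
  moreover have "0 \<le> round_prob (S []) x"
    using valid_Nil[OF Cons.prems(1)[unfolded n] S] S round_prob_nonneg by auto
  ultimately show ?case by (simp add: seq_prob_Cons)
qed

lemma Br_bound:
  assumes "valid_strategy n S" "xs \<in> outcomes n"
  shows "Br k S c d xs \<le> max 0 (k + 1 - c)"
  using assms
proof (induction xs arbitrary: n S c d)
  case Nil then show ?case by simp
next
  case (Cons x xs)
  then obtain n' where n: "n = Suc n'" by (auto simp: outcomes_def)
  obtain p q g where S: "S [] = (p, q, g)" by (metis prod_cases3)
  have x: "x \<in> {0,1,2}" and xs: "xs \<in> outcomes n'" using Cons.prems n by (auto simp: outcomes_def)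
  have v: "0 \<le> g" "g \<le> 1" using valid_Nil[OF Cons.prems(1)[unfolded n] S] by auto
  define c' where "c' = c + ind (x = 2) * g"
  have IH: "Br k (\<lambda>ys. S (x # ys)) c' (d - 1) xs \<le> max 0 (k + 1 - c')"
    using Cons.IH[OF valid_Cons[OF Cons.prems(1)[unfolded n] x] xs] .
  have "c \<le> c'" using v by (simp add: c'_def ind_def)
  show ?case
  proof (cases "d = 0 \<and> c \<le> k")
    case True
    then show ?thesis using IH v unfolding c'_def by (auto simp: S ind_def split: if_splits)
  next
    case False
    then have "Br k S c d (x # xs) = Br k (\<lambda>ys. S (x # ys)) c' (d - 1) xs"
      by (auto simp: S ind_def c'_def)
    then show ?thesis using IH \<open>c \<le> c'\<close> by simp
  qed
qed

lemma E_bound: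
  assumes "valid_strategy n S"
  shows "(\<Sum>xs\<in>outcomes n. seq_prob S xs * exp (Wr k S c d xs / 5 - 3 * Br k S c d xs)) \<le> 1"
  using assms
proof (induction n arbitrary: S c d)
  case 0 then show ?case by (simp add: outcomes_0 seq_prob_Nil)
next
  case (Suc n)
  obtain p q g where S: "S [] = (p, q, g)" by (metis prod_cases3)
  have v: "0 \<le> p" "p \<le> 1/2" "p/4 \<le> q" "q \<le> 1 - p" "0 \<le> g" "g \<le> 1"
    using valid_Nil[OF Suc.prems S] by auto
  define T where "T x = (if d = 0 then ind (x = 1) * g * ind (c + ind (x = 2) * g \<le> k) else 0) / 5
      - 3 * (if d = 0 then ind (x = 2) * g * ind (c \<le> k) else 0)" for x :: nat
  define c' where "c' x = c + ind (x = 2) * g" for x :: nat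
  define E where "E x = (\<Sum>xs\<in>outcomes n. seq_prob (\<lambda>ys. S (x # ys)) xs *
      exp (Wr k (\<lambda>ys. S (x # ys)) (c' x) (d - 1) xs / 5 - 3 * Br k (\<lambda>ys. S (x # ys)) (c' x) (d - 1) xs))" for x
  have E1: "E x \<le> 1" if "x \<in> {0,1,2}" for x
    unfolding E_def using Suc.IH[OF valid_Cons[OF Suc.prems that]] .
  have rp: "0 \<le> round_prob (p, q, g) x" for x using round_prob_nonneg v by auto
  have eq: "seq_prob S (x # xs) * exp (Wr k S c d (x # xs) / 5 - 3 * Br k S c d (x # xs))
      = round_prob (p, q, g) x * exp (T x) * (seq_prob (\<lambda>ys. S (x # ys)) xs *
      exp (Wr k (\<lambda>ys. S (x # ys)) (c' x) (d - 1) xs / 5 - 3 * Br k (\<lambda>ys. S (x # ys)) (c' x) (d - 1) xs))" for x xs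
  proof -
    have "Wr k S c d (x # xs) / 5 - 3 * Br k S c d (x # xs) = T x +
      (Wr k (\<lambda>ys. S (x # ys)) (c' x) (d - 1) xs / 5 - 3 * Br k (\<lambda>ys. S (x # ys)) (c' x) (d - 1) xs)"
      by (simp add: S T_def c'_def algebra_simps)
    then show ?thesis by (simp add: seq_prob_Cons S exp_add)
  qed
  have "(\<Sum>xs\<in>outcomes (Suc n). seq_prob S xs * exp (Wr k S c d xs / 5 - 3 * Br k S c d xs))
      = (\<Sum>x\<in>{0,1,2}. round_prob (p, q, g) x * exp (T x) * E x)"
    unfolding sum_outcomes_Suc eq E_def by (simp add: sum_distrib_left)
  also have "\<dots> \<le> (\<Sum>x\<in>{0,1,2::nat}. round_prob (p, q, g) x * exp (T x))"
  proof (rule sum_mono)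
    fix x :: nat assume "x \<in> {0,1,2}"
    then show "round_prob (p, q, g) x * exp (T x) * E x \<le> round_prob (p, q, g) x * exp (T x)"
      using E1 rp[of x] by (intro mult_left_le) auto
  qed
  also have "\<dots> = (1 - p - q) * exp (T 0) + p * exp (T 1) + q * exp (T 2)"
    by (simp add: round_prob_def)
  also have "\<dots> \<le> 1"
  proof (cases "d = 0 \<and> c \<le> k")
    case True
    then have t: "T 0 = 0" "T 1 = g/5" "T 2 = -3 * g" by (auto simp: T_def ind_def)
    show ?thesis unfolding t using one_step[OF v] by simp
  next
    case False
    then have "T 0 = 0" "T 1 = 0" "T 2 = 0" by (auto simp: T_def ind_def)
    then show ?thesis by simp
  qed
  finally show ?case .
qed

definition cB :: "strategy \<Rightarrow> nat list \<Rightarrow> real" where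
  "cB S h = (\<Sum>i<length h. ind (h ! i = 2) * snd (snd (S (take i h))))"

lemma cB_app: "(\<Sum>j<length h. ind ((h @ ys) ! j = 2) * gam S (h @ ys) j) = cB S h"
  unfolding cB_def gam_def by (intro sum.cong) (auto simp: nth_append)

lemma cB_snoc: "cB S (h @ [x]) = cB S h + ind (x = 2) * snd (snd (S h))"
proof -
  have "cB S (h @ [x]) = (\<Sum>j<length h. ind ((h @ [x]) ! j = 2) * gam S (h @ [x]) j)
      + ind (x = 2) * snd (snd (S h))"
    unfolding cB_def gam_def by (simp add: sum.lessThan_Suc)
  then show ?thesis by (simp add: cB_app)
qed

lemma Wr_Wk:
  "Wr k (\<lambda>ys. S (h @ ys)) (cB S h) d xs =
   (\<Sum>i\<in>{length h + d..<length h + length xs}. ind ((h @ xs) ! i = 1) * gam S (h @ xs) i * Zk S k (h @ xs) i)"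
proof (induction xs arbitrary: h d)
  case Nil then show ?case by simp
next
  case (Cons x xs)
  have IH: "Wr k (\<lambda>ys. S (h @ x # ys)) (cB S h + ind (x = 2) * snd (snd (S h))) (d - 1) xs =
   (\<Sum>i\<in>{Suc (length h) + (d - 1)..<Suc (length h) + length xs}.
      ind ((h @ x # xs) ! i = 1) * gam S (h @ x # xs) i * Zk S k (h @ x # xs) i)"
    using Cons.IH[of "h @ [x]" "d - 1"] by (simp add: cB_snoc)
  have first: "ind ((h @ x # xs) ! length h = 1) * gam S (h @ x # xs) (length h) * Zk S k (h @ x # xs) (length h)
      = ind (x = 1) * snd (snd (S h)) * ind (cB S h + ind (x = 2) * snd (snd (S h)) \<le> k)"
  proof -
    have "(\<Sum>j\<le>length h. ind ((h @ x # xs) ! j = 2) * gam S (h @ x # xs) j)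
        = (\<Sum>j<length h. ind ((h @ x # xs) ! j = 2) * gam S (h @ x # xs) j)
          + ind ((h @ x # xs) ! length h = 2) * gam S (h @ x # xs) (length h)"
      by (simp only: lessThan_Suc_atMost[symmetric] sum.lessThan_Suc)
    also have "\<dots> = cB S h + ind (x = 2) * snd (snd (S h))"
      by (simp only: cB_app) (simp add: gam_def)
    finally have e: "(\<Sum>j\<le>length h. ind ((h @ x # xs) ! j = 2) * gam S (h @ x # xs) j)
        = cB S h + ind (x = 2) * snd (snd (S h))" .
    show ?thesis unfolding Zk_def e by (simp add: gam_def)
  qed
  show ?case
  proof (cases d)
    case 0
    have "(\<Sum>i\<in>{length h..<length h + length (x # xs)}. ind ((h @ x # xs) ! i = 1) * gam S (h @ x # xs) i * Zk S k (h @ x # xs) i)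
       = ind ((h @ x # xs) ! length h = 1) * gam S (h @ x # xs) (length h) * Zk S k (h @ x # xs) (length h)
         + (\<Sum>i\<in>{Suc (length h)..<Suc (length h) + length xs}. ind ((h @ x # xs) ! i = 1) * gam S (h @ x # xs) i * Zk S k (h @ x # xs) i)"
      by (subst sum.atLeast_Suc_lessThan) auto
    note split = this
    have w: "Wr k (\<lambda>ys. S (h @ ys)) (cB S h) d (x # xs) =
      ind (x = 1) * snd (snd (S h)) * ind (cB S h + ind (x = 2) * snd (snd (S h)) \<le> k)
      + Wr k (\<lambda>ys. S (h @ x # ys)) (cB S h + ind (x = 2) * snd (snd (S h))) (d - 1) xs"
      using 0 by simp
    have r: "Suc (length h) + (d - 1) = Suc (length h)" using 0 by simp
    have "Wr k (\<lambda>ys. S (h @ ys)) (cB S h) d (x # xs) =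
      (\<Sum>i\<in>{length h..<length h + length (x # xs)}. ind ((h @ x # xs) ! i = 1) * gam S (h @ x # xs) i * Zk S k (h @ x # xs) i)"
      unfolding w IH r first[symmetric] split by (rule refl)
    then show ?thesis using 0 by simp
  next
    case (Suc d')
    then show ?thesis using IH by simp
  qed
qed

lemma Wk_Wr: "Wk S k xs j = Wr k S 0 j xs"
  using Wr_Wk[of k S "[]" j xs] by (simp add: cB_def Wk_def)

theorem claimA1:
  fixes m :: nat and S :: strategy and k lam :: real and j :: nat
  assumes "valid_strategy m S" and "0 \<le> k" and "j < m"
  shows "(\<Sum>xs\<in>{xs \<in> outcomes m. Wk S k xs j > lam}. seq_prob S xs)
           \<le> exp (- lam / 5 + 3 * (k + 1))"
proof -
  define C where "C = exp (- lam / 5 + 3 * (k + 1))"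
  have "(\<Sum>xs\<in>{xs \<in> outcomes m. Wk S k xs j > lam}. seq_prob S xs)
      = (\<Sum>xs\<in>outcomes m. if Wk S k xs j > lam then seq_prob S xs else 0)"
    by (simp add: sum.inter_filter finite_outcomes)
  also have "\<dots> \<le> (\<Sum>xs\<in>outcomes m. C * (seq_prob S xs * exp (Wr k S 0 j xs / 5 - 3 * Br k S 0 j xs)))"
  proof (rule sum_mono)
    fix xs assume xs: "xs \<in> outcomes m"
    have sp: "0 \<le> seq_prob S xs" using seq_prob_nonneg[OF assms(1) xs] .
    have B: "Br k S 0 j xs \<le> k + 1" using Br_bound[OF assms(1) xs, of k 0 j] assms(2) by simp
    show "(if Wk S k xs j > lam then seq_prob S xs else 0)
        \<le> C * (seq_prob S xs * exp (Wr k S 0 j xs / 5 - 3 * Br k S 0 j xs))"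
    proof (cases "Wk S k xs j > lam")
      case True
      then have "0 \<le> - lam / 5 + 3 * (k + 1) + (Wr k S 0 j xs / 5 - 3 * Br k S 0 j xs)"
        using B by (simp add: Wk_Wr)
      then have "1 \<le> C * exp (Wr k S 0 j xs / 5 - 3 * Br k S 0 j xs)"
        unfolding C_def by (simp add: exp_add[symmetric])
      then have "seq_prob S xs * 1 \<le> seq_prob S xs * (C * exp (Wr k S 0 j xs / 5 - 3 * Br k S 0 j xs))"
        using sp by (intro mult_left_mono) auto
      then show ?thesis using True by (simp add: algebra_simps)
    next
      case False
      then show ?thesis using sp by (simp add: C_def)
    qed
  qed
  also have "\<dots> = C * (\<Sum>xs\<in>outcomes m. seq_prob S xs * exp (Wr k S 0 j xs / 5 - 3 * Br k S 0 j xs))"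
    by (simp add: sum_distrib_left)
  also have "\<dots> \<le> C * 1"
    using E_bound[OF assms(1)] by (intro mult_left_mono) (auto simp: C_def)
  finally show ?thesis by (simp add: C_def)
qed

end
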